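(* Let $x \in \mathbb{R}$ with $1 - x - x^2 \neq 0$, let $m \geq 1$ be an integer and let $n \geq 0$ be an integer. Then \[ \sum_{r=1}^{n} r^m F_r x^r = \frac{1}{1 - x - x^2} \sum_{i=1}^m \binom{m}{i} (-1)^{i + 1} \sum_{r=1}^n r^{m - i} F_r x^r + \frac{x^2}{1 - x - x^2} \sum_{i=1}^m \binom{m}{i} \sum_{r=1}^{n-1} r^{m - i} F_r x^r - \frac{n^m (F_{n+1} x^{n+1} + F_n x^{n+2})}{1 - x - x^2}. \]
   Context: $(F_r)_{r \geq 0}$ is the Fibonacci sequence: $F_0 = 0$, $F_1 = 1$, $F_r = F_{r-1} + F_{r-2}$ for $r \geq 2$. Empty sums are $0$. *)

theory Defs
  imports Complex_Main "HOL-Number_Theory.Fib"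
begin

end

theory Submission
  imports Defs
begin

lemma binA:
  fixes r :: real
  shows "(\<Sum>i = 1..m. real (m choose i) * (-1) ^ (i + 1) * r ^ (m - i)) = r ^ m - (r - 1) ^ m"
proof -
  have "(r - 1) ^ m = ((-1) + r) ^ m" by simp
  also have "\<dots> = (\<Sum>i\<le>m. real (m choose i) * (-1) ^ i * r ^ (m - i))"
    by (rule binomial_ring)
  also have "\<dots> = r ^ m + (\<Sum>i = 1..m. real (m choose i) * (-1) ^ i * r ^ (m - i))"
  proof -
    have "{..m} - {0} = {1..m}" by auto
    then show ?thesis by (simp add: sum.remove[of "{..m}" 0])
  qed
  finally show ?thesis by (simp add: sum_negf[symmetric])
qed

lemma binB:
  fixes r :: real
  shows "(\<Sum>i = 1..m. real (m choose i) * r ^ (m - i)) = (r + 1) ^ m - r ^ m"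
proof -
  have "(r + 1) ^ m = (1 + r) ^ m" by (simp add: add.commute)
  also have "\<dots> = (\<Sum>i\<le>m. real (m choose i) * 1 ^ i * r ^ (m - i))"
    by (rule binomial_ring)
  also have "\<dots> = r ^ m + (\<Sum>i = 1..m. real (m choose i) * r ^ (m - i))"
  proof -
    have "{..m} - {0} = {1..m}" by auto
    then show ?thesis by (simp add: sum.remove[of "{..m}" 0])
  qed
  finally show ?thesis by simp
qed

lemma key:
  fixes x :: real and m n :: nat
  assumes "m \<ge> 1"
  shows "(\<Sum>r = 1..n. real r ^ m * real (fib r) * x ^ r) * (1 - x - x ^ 2) =
     (\<Sum>r = 1..n. (real r ^ m - (real r - 1) ^ m) * real (fib r) * x ^ r)
   + (\<Sum>r = 1..n - 1. ((real r + 1) ^ m - real r ^ m) * real (fib r) * x ^ r * x ^ 2)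
   - real n ^ m * (real (fib (n + 1)) * x ^ (n + 1) + real (fib n) * x ^ (n + 2))"
proof (induction n)
  case 0
  then show ?case using assms by simp
next
  case (Suc n)
  show ?case
  proof (cases n)
    case 0
    then show ?thesis using assms by (simp add: power2_eq_square algebra_simps numeral_eq_Suc)
  next
    case (Suc k)
    have e: "Suc n - 1 = Suc (n - 1)" using Suc by simp
    have f: "real (fib (Suc (Suc n) + 1)) = real (fib (Suc n + 1)) + real (fib (Suc n))"
      by simp
    have f2: "real (fib (Suc n + 1)) = real (fib (Suc n)) + real (fib n)"
      by simp
    show ?thesis
      unfolding e
      using Suc.IH Suc
      by (simp add: f2 algebra_simps power2_eq_square)
  qed
qed

theorem theorem2p1:
  fixes x :: real and m n :: nat
  assumes "1 - x - x ^ 2 \<noteq> 0" and "m \<ge> 1"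
  shows "(\<Sum>r = 1..n. real r ^ m * real (fib r) * x ^ r) =
     1 / (1 - x - x ^ 2) * (\<Sum>i = 1..m. real (m choose i) * (-1) ^ (i + 1) *
        (\<Sum>r = 1..n. real r ^ (m - i) * real (fib r) * x ^ r))
   + x ^ 2 / (1 - x - x ^ 2) * (\<Sum>i = 1..m. real (m choose i) *
        (\<Sum>r = 1..n - 1. real r ^ (m - i) * real (fib r) * x ^ r))
   - real n ^ m * (real (fib (n + 1)) * x ^ (n + 1) + real (fib n) * x ^ (n + 2)) / (1 - x - x ^ 2)"
proof -
  have A: "(\<Sum>i = 1..m. real (m choose i) * (-1) ^ (i + 1) *
        (\<Sum>r = 1..n. real r ^ (m - i) * real (fib r) * x ^ r))
     = (\<Sum>r = 1..n. (real r ^ m - (real r - 1) ^ m) * real (fib r) * x ^ r)"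
  proof -
    have "(\<Sum>i = 1..m. real (m choose i) * (-1) ^ (i + 1) *
        (\<Sum>r = 1..n. real r ^ (m - i) * real (fib r) * x ^ r))
      = (\<Sum>r = 1..n. (\<Sum>i = 1..m. real (m choose i) * (-1) ^ (i + 1) * real r ^ (m - i)) * real (fib r) * x ^ r)"
      apply (simp add: sum_distrib_left sum_distrib_right mult.assoc)
      apply (subst sum.swap)
      apply simp
      done
    then show ?thesis by (simp only: binA)
  qed
  have B: "(\<Sum>i = 1..m. real (m choose i) *
        (\<Sum>r = 1..n - 1. real r ^ (m - i) * real (fib r) * x ^ r))
     = (\<Sum>r = 1..n - 1. ((real r + 1) ^ m - real r ^ m) * real (fib r) * x ^ r)"
  proof -
    have "(\<Sum>i = 1..m. real (m choose i) *
        (\<Sum>r = 1..n - 1. real r ^ (m - i) * real (fib r) * x ^ r))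
      = (\<Sum>r = 1..n - 1. (\<Sum>i = 1..m. real (m choose i) * real r ^ (m - i)) * real (fib r) * x ^ r)"
      apply (simp add: sum_distrib_left sum_distrib_right mult.assoc)
      apply (subst sum.swap)
      apply simp
      done
    then show ?thesis by (simp only: binB)
  qed
  have C: "x ^ 2 * (\<Sum>r = 1..n - 1. ((real r + 1) ^ m - real r ^ m) * real (fib r) * x ^ r)
     = (\<Sum>r = 1..n - 1. ((real r + 1) ^ m - real r ^ m) * real (fib r) * x ^ r * x ^ 2)"
    by (simp add: sum_distrib_left mult.commute)
  note K = key[OF assms(2), of x n]
  have G: "\<And>S D P Q R y :: real. D \<noteq> 0 \<Longrightarrow> S * D = P + y * Q - R \<Longrightarrow>
      S = 1 / D * P + y / D * Q - R / D"
  proof -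
    fix S D P Q R y :: real
    assume d: "D \<noteq> 0" and e: "S * D = P + y * Q - R"
    have "S = (S * D) / D" using d by simp
    also have "\<dots> = 1 / D * P + y / D * Q - R / D" unfolding e by (simp add: diff_divide_distrib add_divide_distrib)
    finally show "S = 1 / D * P + y / D * Q - R / D" .
  qed
  show ?thesis
    unfolding A B
    by (rule G[OF assms(1)]) (use K C in simp)
qed

end
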